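(* For every positive integer $n$, the average value of the Wiener index over $\overline{\mathcal{G}}_n$ is $$W_{avr}(\overline{\mathcal{G}}_n)=\frac{1}{|\overline{\mathcal{G}}_n|}\sum_{G\in\overline{\mathcal{G}}_n}W(G)=18n^3+18n^2-9n.$$
   Context: The Wiener index is $W(G)=\sum_{\{u,v\}\subseteq V(G)}d_G(u,v)$, $d_G$ the shortest-path distance. A polyphenyl hexagonal chain $\overline{G}_n=\overline{H}_0\cdots\overline{H}_{n-1}$ with $n$ hexagons consists of pairwise vertex-disjoint hexagons (6-cycles) $\overline{H}_0,\dots,\overline{H}_{n-1}$ together with cut-edges: $\overline{G}_1=\overline{H}_0$, and for $k\ge1$, $\overline{G}_{k+1}$ is obtained from $\overline{G}_k$ by adding $\overline{H}_k$ and a cut-edge joining a vertex $c_k$ of $\overline{H}_k$ to a vertex $t_k$ of $\overline{H}_{k-1}$, with $t_k\ne c_{k-1}$ for $k\ge2$. For $1\le i\le n-2$ label $\overline{H}_i$ by $O$, $M$ or $P$ according as the distance in $\overline{H}_i$ between $c_i$ and $t_{i+1}$ is $1$, $2$ or $3$; the word $x_1\cdots x_{n-2}$ over $\{O,M,P\}$ is the code of the chain (empty if $n\le2$). The code determines the chain up to isomorphism, and a code and its reverse describe the same chain. $\overline{\mathcal{G}}_n$ denotes the set of all polyphenyl hexagonal chains with $n$ hexagons, i.e. one chain for each class of codes of length $n-2$ under identification of a word with its reverse (so $|\overline{\mathcal{G}}_n|=\frac12(3^{n-2}+3^{\lfloor (n-1)/2\rfloor})$ for $n\ge2$). *)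

theory Defs
  imports Complex_Main
begin

definition graph_dist :: "('a \<times> 'a) set \<Rightarrow> 'a \<Rightarrow> 'a \<Rightarrow> nat" where
  "graph_dist E u v = (LEAST k. (u, v) \<in> E ^^ k)"

text \<open>Wiener index: sum of distances over unordered pairs of distinct vertices,
  written as half the sum over ordered pairs (distance is symmetric and d(u,u)=0).\<close>

definition wiener :: "'a set \<Rightarrow> ('a \<times> 'a) set \<Rightarrow> real" where
  "wiener V E = (\<Sum>u\<in>V. \<Sum>v\<in>V. real (graph_dist E u v)) / 2"

datatype letter = Ortho | Meta | Para

text \<open>Distance in a hexagon between c_i and t_(i+1) for the label of H_i.\<close>
fun letter_dist :: "letter \<Rightarrow> nat" where
  "letter_dist Ortho = 1" | "letter_dist Meta = 2" | "letter_dist Para = 3"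

text \<open>Vertex (i,j) is vertex j of hexagon H_i, j < 6, vertices of H_i in cyclic order.\<close>
definition chain_vertices :: "nat \<Rightarrow> (nat \<times> nat) set" where
  "chain_vertices n = {0..<n} \<times> {0..<6}"

text \<open>Attachment vertex t_k (in H_(k-1)) for k \<ge> 1: t_1 is vertex 0 of H_0
  (any choice gives an isomorphic chain), and t_k for k \<ge> 2 is at distance
  letter_dist x_(k-1) from c_(k-1) = vertex 0 of H_(k-1). The code word
  x_1 ... x_(n-2) is the list xs, x_i = xs ! (i - 1).  c_k is vertex 0 of H_k.\<close>
definition attach :: "letter list \<Rightarrow> nat \<Rightarrow> nat" where
  "attach xs k = (if k \<le> 1 then 0 else letter_dist (xs ! (k - 2)))"

definition chain_edges0 :: "nat \<Rightarrow> letter list \<Rightarrow> ((nat \<times> nat) \<times> (nat \<times> nat)) set" where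
  "chain_edges0 n xs =
     {((i, j), (i, (j + 1) mod 6)) | i j. i < n \<and> j < 6}
     \<union> {((k - 1, attach xs k), (k, 0)) | k. 1 \<le> k \<and> k < n}"

definition chain_edges :: "nat \<Rightarrow> letter list \<Rightarrow> ((nat \<times> nat) \<times> (nat \<times> nat)) set" where
  "chain_edges n xs = chain_edges0 n xs \<union> (chain_edges0 n xs)\<inverse>"

definition chain_wiener :: "nat \<Rightarrow> letter list \<Rightarrow> real" where
  "chain_wiener n xs = wiener (chain_vertices n) (chain_edges n xs)"

text \<open>The classes of codes of length n-2 under identification of a word with its reverse;
  the set of chains \<G>_n has one chain per class.\<close>
definition code_classes :: "nat \<Rightarrow> letter list set set" where
  "code_classes n = {{w, rev w} | w. length w = n - 2}"

definition avg_wiener :: "nat \<Rightarrow> real" where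
  "avg_wiener n =
     (\<Sum>C\<in>code_classes n. chain_wiener n (SOME w. w \<in> C)) / real (card (code_classes n))"

end

theory Submission
  imports Defs
begin


definition dh :: "nat \<Rightarrow> nat \<Rightarrow> nat" where
  "dh a b = min (if a \<le> b then b - a else a - b) (6 - (if a \<le> b then b - a else a - b))"

lemma six_cases: "(a::nat) < 6 \<Longrightarrow> a = 0 \<or> a = 1 \<or> a = 2 \<or> a = 3 \<or> a = 4 \<or> a = 5" by auto

lemma dh_same[simp]: "dh a a = 0" by (simp add: dh_def)
lemma dh_sym: "dh a b = dh b a" by (simp add: dh_def)
lemma dh_tri1: "a<6 \<Longrightarrow> b<6 \<Longrightarrow> dh a ((b+1) mod 6) \<le> dh a b + 1"
  by (drule six_cases, drule six_cases, auto simp: dh_def)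
lemma dh_tri2: "a<6 \<Longrightarrow> b<6 \<Longrightarrow> dh a b \<le> dh a ((b+1) mod 6) + 1"
  by (drule six_cases, drule six_cases, auto simp: dh_def)
lemma dh_tri1': "a<6 \<Longrightarrow> b<6 \<Longrightarrow> dh ((b+1) mod 6) a \<le> dh b a + 1"
  by (drule six_cases, drule six_cases, auto simp: dh_def)
lemma dh_tri2': "a<6 \<Longrightarrow> b<6 \<Longrightarrow> dh b a \<le> dh ((b+1) mod 6) a + 1"
  by (drule six_cases, drule six_cases, auto simp: dh_def)
lemma dh_pred: "a<6 \<Longrightarrow> b<6 \<Longrightarrow> a\<noteq>b \<Longrightarrow> dh a ((b+5) mod 6) + 1 = dh a b \<or> dh a ((b+1) mod 6) + 1 = dh a b"
  by (drule six_cases, drule six_cases, auto simp: dh_def)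
lemma dh_zero: "a<6 \<Longrightarrow> b<6 \<Longrightarrow> dh a b = 0 \<Longrightarrow> a = b"
  by (drule six_cases, drule six_cases, auto simp: dh_def)
lemma dh_sum: "a<6 \<Longrightarrow> (\<Sum>b<6. dh a b) = 9"
  by (drule six_cases, auto simp: dh_def numeral_eq_Suc)
lemma dh_sum': "a<6 \<Longrightarrow> (\<Sum>b<6. dh b a) = 9"
proof -
  have "(\<Sum>b<6. dh b a) = (\<Sum>b<6. dh a b)" by (rule sum.cong) (auto intro: dh_sym)
  then show "a<6 \<Longrightarrow> ?thesis" using dh_sum by simp
qed
lemma dh_sum2: "(\<Sum>a<6. \<Sum>b<6. dh a b) = 54"
  by (simp add: dh_def numeral_eq_Suc)
lemma dh0: "a \<le> 3 \<Longrightarrow> dh 0 a = a" by (auto simp: dh_def)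
lemma attach_le: "attach xs k \<le> 3"
  by (cases "xs ! (k-2)") (auto simp: attach_def)
lemma attach_lt: "attach xs k < 6" using attach_le[of xs k] by simp

definition g :: "letter list \<Rightarrow> nat \<Rightarrow> nat" where
  "g xs k = dh 0 (attach xs (Suc k)) + 1"

definition F :: "letter list \<Rightarrow> nat \<Rightarrow> nat \<Rightarrow> nat \<Rightarrow> nat \<Rightarrow> nat" where
  "F xs i a j b = dh a (attach xs (Suc i)) + 1 + (\<Sum>k\<in>{Suc i..<j}. g xs k) + dh 0 b"

fun D :: "letter list \<Rightarrow> nat \<times> nat \<Rightarrow> nat \<times> nat \<Rightarrow> nat" where
  "D xs (i,a) (j,b) = (if i = j then dh a b else if i < j then F xs i a j b else F xs j b i a)"

lemma cut_eq1: "i \<le> m \<Longrightarrow> D xs (i,a) (Suc m, 0) = D xs (i,a) (m, attach xs (Suc m)) + 1"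
proof (cases "i = m")
  case True then show ?thesis by (simp add: F_def)
next
  case False
  assume "i \<le> m"
  with False have "i < m" by simp
  then show ?thesis by (simp add: F_def sum.atLeastLessThan_Suc g_def)
qed

lemma cut_eq2: "Suc m \<le> i \<Longrightarrow> D xs (i,a) (m, attach xs (Suc m)) = D xs (i,a) (Suc m, 0) + 1"
proof (cases "i = Suc m")
  case True then show ?thesis by (simp add: F_def dh_sym)
next
  case False
  assume "Suc m \<le> i"
  with False have "Suc m < i" by simp
  then show ?thesis by (simp add: F_def sum.atLeast_Suc_lessThan g_def)
qed

lemma hex1: "a < 6 \<Longrightarrow> j < 6 \<Longrightarrow> D xs (i,a) (p, (j+1) mod 6) \<le> D xs (i,a) (p,j) + 1"
  using dh_tri1[of a j] dh_tri1[of 0 j] dh_tri1'[of "attach xs (Suc p)" j] attach_lt[of xs "Suc p"]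
  by (auto simp: F_def)

lemma hex2: "a < 6 \<Longrightarrow> j < 6 \<Longrightarrow> D xs (i,a) (p,j) \<le> D xs (i,a) (p, (j+1) mod 6) + 1"
  using dh_tri2[of a j] dh_tri2[of 0 j] dh_tri2'[of "attach xs (Suc p)" j] attach_lt[of xs "Suc p"]
  by (auto simp: F_def)

lemma edges_cases:
  assumes "(x,y) \<in> chain_edges n xs"
  obtains (h1) p j where "p < n" "j < 6" "x = (p,j)" "y = (p, (j+1) mod 6)"
  | (h2) p j where "p < n" "j < 6" "y = (p,j)" "x = (p, (j+1) mod 6)"
  | (c1) m where "Suc m < n" "x = (m, attach xs (Suc m))" "y = (Suc m, 0)"
  | (c2) m where "Suc m < n" "y = (m, attach xs (Suc m))" "x = (Suc m, 0)"
  using assms unfolding chain_edges_def chain_edges0_def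
  by (auto; metis Suc_diff_1 Suc_le_lessD)

lemma lip: assumes "(x,y) \<in> chain_edges n xs" "a < 6"
  shows "D xs (i,a) y \<le> D xs (i,a) x + 1"
  using assms(1)
proof (cases rule: edges_cases)
  case (h1 p j) then show ?thesis using hex1[OF assms(2)] by simp
next
  case (h2 p j) then show ?thesis using hex2[OF assms(2)] by simp
next
  case (c1 m) then show ?thesis using cut_eq1[of i m xs a] cut_eq2[of m i xs a] by (cases "i \<le> m") auto
next
  case (c2 m) then show ?thesis using cut_eq1[of i m xs a] cut_eq2[of m i xs a] by (cases "i \<le> m") auto
qed

lemma lower: "(u,v) \<in> (chain_edges n xs)^^k \<Longrightarrow> snd u < 6 \<Longrightarrow> D xs u v \<le> k"
proof (induction k arbitrary: v)
  case 0
  obtain i a where u: "u = (i,a)" by (cases u)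
  from 0 have "v = u" by simp
  then show ?case by (simp add: u)
next
  case (Suc k)
  obtain i a where u: "u = (i,a)" by (cases u)
  from Suc.prems(1) obtain w where w1: "(u,w) \<in> (chain_edges n xs)^^k" and w2: "(w,v) \<in> chain_edges n xs"
    by auto
  have "D xs u w \<le> k" using Suc.IH[OF w1 Suc.prems(2)] .
  moreover have "D xs u v \<le> D xs u w + 1" using lip[OF w2, of a i] Suc.prems(2) u by simp
  ultimately show ?case by simp
qed

lemma hexedge1: "p < n \<Longrightarrow> j < 6 \<Longrightarrow> ((p,j),(p,(j+1) mod 6)) \<in> chain_edges n xs"
  unfolding chain_edges_def chain_edges0_def by blast
lemma hexedge2: "p < n \<Longrightarrow> j < 6 \<Longrightarrow> ((p,(j+1) mod 6),(p,j)) \<in> chain_edges n xs"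
  unfolding chain_edges_def chain_edges0_def by blast
lemma cutedge1: "Suc m < n \<Longrightarrow> ((m, attach xs (Suc m)),(Suc m,0)) \<in> chain_edges n xs"
  unfolding chain_edges_def chain_edges0_def by (auto intro!: exI[of _ "Suc m"])
lemma cutedge2: "Suc m < n \<Longrightarrow> ((Suc m,0),(m, attach xs (Suc m))) \<in> chain_edges n xs"
  unfolding chain_edges_def chain_edges0_def by (auto intro!: exI[of _ "Suc m"])

lemma hexpred:
  assumes "p < n" "b < 6" "c < 6" "c \<noteq> b"
  obtains b' where "b' < 6" "((p,b'),(p,b)) \<in> chain_edges n xs" "dh c b' + 1 = dh c b"
proof -
  have m5: "((b+5) mod 6 + 1) mod 6 = b" using assms(2) by (drule_tac six_cases) auto
  from dh_pred[OF assms(3,2,4)] show ?thesis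
  proof
    assume "dh c ((b+5) mod 6) + 1 = dh c b"
    moreover have "((p,(b+5) mod 6),(p,b)) \<in> chain_edges n xs"
      using hexedge1[OF assms(1), of "(b+5) mod 6" xs] m5 by simp
    ultimately show ?thesis using that[of "(b+5) mod 6"] by simp
  next
    assume "dh c ((b+1) mod 6) + 1 = dh c b"
    then show ?thesis using that[of "(b+1) mod 6"] hexedge2[OF assms(1,2), of xs] by simp
  qed
qed

lemma pred:
  assumes "i < n" "a < 6" "j < n" "b < 6" "(j,b) \<noteq> (i,a)"
  shows "\<exists>w \<in> chain_vertices n. (w,(j,b)) \<in> chain_edges n xs \<and> D xs (i,a) w + 1 = D xs (i,a) (j,b)"
proof -
  consider "j = i" | "i < j" | "j < i" by linarith
  then show ?thesis
  proof cases
    case 1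
    with assms have "a \<noteq> b" by auto
    from hexpred[OF assms(3,4,2) this] obtain b' where
      b': "b' < 6" "((j,b'),(j,b)) \<in> chain_edges n xs" "dh a b' + 1 = dh a b" .
    have "(j,b') \<in> chain_vertices n" using b' assms by (simp add: chain_vertices_def)
    moreover have "D xs (i,a) (j,b') + 1 = D xs (i,a) (j,b)" using 1 b' by simp
    ultimately show ?thesis using b'(2) by blast
  next
    case 2
    show ?thesis
    proof (cases "b = 0")
      case False
      from hexpred[OF assms(3,4), of 0] False obtain b' where
        b': "b' < 6" "((j,b'),(j,b)) \<in> chain_edges n xs" "dh 0 b' + 1 = dh 0 b" by auto
      have "(j,b') \<in> chain_vertices n" using b' assms by (simp add: chain_vertices_def)
      moreover have "D xs (i,a) (j,b') + 1 = D xs (i,a) (j,b)" using 2 b' by (simp add: F_def)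
      ultimately show ?thesis using b'(2) by blast
    next
      case True
      obtain m where jm: "j = Suc m" using 2 by (cases j) auto
      have "i \<le> m" using 2 jm by simp
      have "(m, attach xs (Suc m)) \<in> chain_vertices n" using assms jm attach_lt[of xs "Suc m"]
        by (simp add: chain_vertices_def)
      moreover have "((m, attach xs (Suc m)), (j,b)) \<in> chain_edges n xs"
        using cutedge1[of m n xs] assms jm True by simp
      moreover have "D xs (i,a) (m, attach xs (Suc m)) + 1 = D xs (i,a) (j,b)"
        using cut_eq1[OF \<open>i \<le> m\<close>, of xs a] jm True by simp
      ultimately show ?thesis by blast
    qed
  next
    case 3
    show ?thesis
    proof (cases "b = attach xs (Suc j)")
      case False
      from hexpred[OF assms(3,4) attach_lt, of "xs" "Suc j"] False obtain b' where
        b': "b' < 6" "((j,b'),(j,b)) \<in> chain_edges n xs" "dh (attach xs (Suc j)) b' + 1 = dh (attach xs (Suc j)) b"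
        by metis
      have "(j,b') \<in> chain_vertices n" using b' assms by (simp add: chain_vertices_def)
      moreover have "D xs (i,a) (j,b') + 1 = D xs (i,a) (j,b)" using 3 b' by (simp add: F_def dh_sym)
      ultimately show ?thesis using b'(2) by blast
    next
      case True
      have "Suc j \<le> i" using 3 by simp
      have "(Suc j, 0) \<in> chain_vertices n" using assms 3 by (simp add: chain_vertices_def)
      moreover have "((Suc j, 0), (j,b)) \<in> chain_edges n xs"
        using cutedge2[of j n xs] assms 3 True by simp
      moreover have "D xs (i,a) (Suc j, 0) + 1 = D xs (i,a) (j,b)"
        using cut_eq2[OF \<open>Suc j \<le> i\<close>, of xs a] True by simp
      ultimately show ?thesis by blast
    qed
  qed
qed

lemma D_zero: "a < 6 \<Longrightarrow> b < 6 \<Longrightarrow> D xs (i,a) (j,b) = 0 \<Longrightarrow> (j,b) = (i,a)"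
  by (auto simp: F_def split: if_splits dest: dh_zero)

lemma upper:
  assumes "u \<in> chain_vertices n"
  shows "\<forall>v \<in> chain_vertices n. D xs u v = m \<longrightarrow> (u,v) \<in> (chain_edges n xs)^^m"
proof (induction m)
  case 0
  obtain i a where u: "u = (i,a)" by (cases u)
  show ?case
  proof (intro ballI impI)
    fix v assume v: "v \<in> chain_vertices n" "D xs u v = 0"
    obtain j b where vv: "v = (j,b)" by (cases v)
    from v assms have "v = u" using D_zero[of a b xs i j] by (auto simp: u vv chain_vertices_def)
    then show "(u,v) \<in> (chain_edges n xs)^^0" by simp
  qed
next
  case (Suc m)
  obtain i a where u: "u = (i,a)" by (cases u)
  show ?case
  proof (intro ballI impI)
    fix v assume v: "v \<in> chain_vertices n" "D xs u v = Suc m"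
    obtain j b where vv: "v = (j,b)" by (cases v)
    have "v \<noteq> u" using v(2) by (auto simp: u)
    then obtain w where w: "w \<in> chain_vertices n" "(w,v) \<in> chain_edges n xs" "D xs u w + 1 = D xs u v"
      using pred[of i n a j b xs] assms v(1) by (auto simp: u vv chain_vertices_def)
    then have "(u,w) \<in> (chain_edges n xs)^^m" using Suc.IH v(2) by auto
    with w(2) show "(u,v) \<in> (chain_edges n xs)^^Suc m" by auto
  qed
qed

lemma graph_dist_D:
  assumes "u \<in> chain_vertices n" "v \<in> chain_vertices n"
  shows "graph_dist (chain_edges n xs) u v = D xs u v"
  unfolding graph_dist_def
proof (rule Least_equality)
  show "(u, v) \<in> chain_edges n xs ^^ D xs u v" using upper[OF assms(1)] assms(2) by blast
next
  fix k assume "(u, v) \<in> chain_edges n xs ^^ k"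
  moreover have "snd u < 6" using assms(1) by (auto simp: chain_vertices_def)
  ultimately show "D xs u v \<le> k" using lower by blast
qed



lemma sum_V: "(\<Sum>u\<in>chain_vertices n. f u) = (\<Sum>i<n. \<Sum>a<6. f (i,a))"
  unfolding chain_vertices_def atLeast0LessThan
  by (simp add: sum.cartesian_product)

definition Qf :: "letter list \<Rightarrow> nat \<Rightarrow> nat \<Rightarrow> nat" where
  "Qf xs i j = (if i = j then 54 else 144 + 36 * (\<Sum>k\<in>{Suc (min i j)..<max i j}. g xs k))"

lemma Q_lt: "i < j \<Longrightarrow> (\<Sum>a<6. \<Sum>b<6. F xs i a j b) = 144 + 36 * (\<Sum>k\<in>{Suc i..<j}. g xs k)"
  unfolding F_def sum.distrib by (simp add: dh_sum dh_sum' attach_lt sum_distrib_left[symmetric])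

lemma Q: "(\<Sum>a<6. \<Sum>b<6. D xs (i,a) (j,b)) = Qf xs i j"
proof -
  consider "i = j" | "i < j" | "j < i" by linarith
  then show ?thesis
  proof cases
    case 1 then show ?thesis by (simp add: Qf_def dh_sum2)
  next
    case 2 then show ?thesis using Q_lt[OF 2] by (simp add: Qf_def)
  next
    case 3
    have "(\<Sum>a<6. \<Sum>b<6. D xs (i,a) (j,b)) = (\<Sum>a<6. \<Sum>b<6. F xs j b i a)" using 3 by simp
    also have "\<dots> = (\<Sum>b<6. \<Sum>a<6. F xs j b i a)" by (rule sum.swap)
    also have "\<dots> = Qf xs i j" using Q_lt[OF 3] 3 by (simp add: Qf_def)
    finally show ?thesis .
  qed
qed

lemma sym_sum:
  assumes "\<And>i j. h i j = h j i"
  shows "(\<Sum>i<(n::nat). \<Sum>j<n. h i j) = (\<Sum>i<n. h i i) + 2 * (\<Sum>j<n. \<Sum>i<j. (h i j :: nat))"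
proof (induction n)
  case 0 then show ?case by simp
next
  case (Suc n)
  have "(\<Sum>i<Suc n. \<Sum>j<Suc n. h i j) = (\<Sum>i<n. \<Sum>j<n. h i j) + (\<Sum>i<n. h i n) + (\<Sum>j<n. h n j) + h n n"
    by (simp add: sum.distrib)
  also have "(\<Sum>j<n. h n j) = (\<Sum>i<n. h i n)" using assms by simp
  finally show ?case using Suc.IH by simp
qed

lemma tri: "(\<Sum>i<j. \<Sum>k\<in>{Suc i..<j}. (f k::nat)) = (\<Sum>k<j. f k * k)"
proof (induction j)
  case 0 then show ?case by simp
next
  case (Suc j)
  have "(\<Sum>i<Suc j. \<Sum>k\<in>{Suc i..<Suc j}. f k) = (\<Sum>i<j. \<Sum>k\<in>{Suc i..<Suc j}. f k)"
    by simp
  also have "\<dots> = (\<Sum>i<j. (\<Sum>k\<in>{Suc i..<j}. f k) + f j)"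
    by (rule sum.cong) (auto simp: sum.atLeastLessThan_Suc)
  also have "\<dots> = (\<Sum>k<j. f k * k) + j * f j" using Suc.IH by (simp add: sum.distrib)
  finally show ?case by simp
qed

lemma tri2: "(\<Sum>j<n. \<Sum>k<j. (f k::nat) * k) = (\<Sum>k<n. f k * k * (n - 1 - k))"
proof (induction n)
  case 0 then show ?case by simp
next
  case (Suc n)
  have "(\<Sum>k<Suc n. f k * k * (Suc n - 1 - k)) = (\<Sum>k<n. f k * k * (n - k))" by simp
  also have "\<dots> = (\<Sum>k<n. f k * k * (n - 1 - k) + f k * k)"
  proof (rule sum.cong)
    fix k assume "k \<in> {..<n}"
    then have "n - k = Suc (n - 1 - k)" by auto
    then show "f k * k * (n - k) = f k * k * (n - 1 - k) + f k * k" by simp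
  qed simp
  finally show ?case using Suc.IH by (simp add: sum.distrib)
qed

definition T :: "letter list \<Rightarrow> nat \<Rightarrow> nat" where
  "T xs n = (\<Sum>k<n. g xs k * k * (n - 1 - k))"

lemma S: "(\<Sum>i<n. \<Sum>j<n. Qf xs i j) = 54*n + 2*(144*(\<Sum>j<n. j) + 36 * T xs n)"
proof -
  have "(\<Sum>i<n. \<Sum>j<n. Qf xs i j) = (\<Sum>i<n. Qf xs i i) + 2 * (\<Sum>j<n. \<Sum>i<j. Qf xs i j)"
    by (rule sym_sum) (simp add: Qf_def min.commute max.commute)
  also have "(\<Sum>i<n. Qf xs i i) = 54 * n" by (simp add: Qf_def)
  also have "(\<Sum>j<n. \<Sum>i<j. Qf xs i j) = (\<Sum>j<n. \<Sum>i<j. 144 + 36 * (\<Sum>k\<in>{Suc i..<j}. g xs k))"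
    by (intro sum.cong refl) (simp add: Qf_def)
  also have "\<dots> = (\<Sum>j<n. 144 * j) + 36 * (\<Sum>j<n. \<Sum>i<j. (\<Sum>k\<in>{Suc i..<j}. g xs k))"
    by (simp add: sum.distrib sum_distrib_left) (rule sum.cong, auto)
  also have "\<dots> = 144*(\<Sum>j<n. j) + 36 * T xs n"
    by (simp only: sum_distrib_left[symmetric] tri tri2 T_def)
  finally show ?thesis .
qed

lemma gauss_real: "real (\<Sum>j<n. j) = real n * (real n - 1) / 2"
  by (induction n) (auto simp: field_simps)

lemma wiener_formula:
  "chain_wiener n xs = 27 * real n + 72 * real n * (real n - 1) + 36 * real (T xs n)"
proof -
  have "chain_wiener n xs = (\<Sum>u\<in>chain_vertices n. \<Sum>v\<in>chain_vertices n. real (D xs u v)) / 2"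
    unfolding chain_wiener_def wiener_def
    by (intro arg_cong[where f="\<lambda>x. x / 2"] sum.cong refl) (simp add: graph_dist_D)
  also have "(\<Sum>u\<in>chain_vertices n. \<Sum>v\<in>chain_vertices n. real (D xs u v))
      = real (\<Sum>u\<in>chain_vertices n. \<Sum>v\<in>chain_vertices n. D xs u v)" by simp
  also have "(\<Sum>u\<in>chain_vertices n. \<Sum>v\<in>chain_vertices n. D xs u v) = (\<Sum>i<n. \<Sum>a<6. \<Sum>j<n. \<Sum>b<6. D xs (i,a) (j,b))"
    by (simp add: sum_V)
  also have "\<dots> = (\<Sum>i<n. \<Sum>j<n. \<Sum>a<6. \<Sum>b<6. D xs (i,a) (j,b))"
    by (intro sum.cong refl sum.swap)
  also have "\<dots> = (\<Sum>i<n. \<Sum>j<n. Qf xs i j)" by (simp only: Q)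
  also have "\<dots> = 54*n + 2*(144*(\<Sum>j<n. j) + 36 * T xs n)" by (rule S)
  finally show ?thesis using gauss_real[of n] by (simp add: field_simps)
qed



lemma g_code: "1 \<le> k \<Longrightarrow> g xs k = letter_dist (xs ! (k-1)) + 1"
proof -
  assume k: "1 \<le> k"
  have "attach xs (Suc k) = letter_dist (xs ! (k-1))" using k
    by (simp add: attach_def numeral_2_eq_2)
  then show ?thesis unfolding g_def using dh0 attach_le[of xs "Suc k"] by simp
qed

lemma T_rev:
  assumes "length w = n - 2"
  shows "T (rev w) n = T w n"
proof -
  have "T (rev w) n = (\<Sum>k<n. g (rev w) (n - Suc k) * (n - Suc k) * (n - 1 - (n - Suc k)))"
    unfolding T_def by (rule sum.nat_diff_reindex[symmetric])
  also have "\<dots> = T w n" unfolding T_def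
  proof (rule sum.cong)
    fix k assume k: "k \<in> {..<n}"
    show "g (rev w) (n - Suc k) * (n - Suc k) * (n - 1 - (n - Suc k)) = g w k * k * (n - 1 - k)"
    proof (cases "k = 0 \<or> k = n - 1")
      case True then show ?thesis using k by auto
    next
      case False
      then have k1: "1 \<le> k" "k \<le> n - 2" "1 \<le> n - Suc k" using k by auto
      have idx: "n - Suc k - 1 < length w" "length w - Suc (n - Suc k - 1) = k - 1"
        using k1 k assms by auto
      have "g (rev w) (n - Suc k) = g w k"
        using k1 idx by (simp add: g_code rev_nth)
      moreover have "n - 1 - (n - Suc k) = k" using k by auto
      ultimately show ?thesis by simp
    qed
  qed simp
  finally show ?thesis .
qed

fun sw :: "letter \<Rightarrow> letter" where
  "sw Ortho = Para" | "sw Meta = Meta" | "sw Para = Ortho"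

lemma sw_sw[simp]: "sw (sw x) = x" by (cases x) auto
lemma ld_sw: "letter_dist x + letter_dist (sw x) = 4" by (cases x) auto
lemma map_sw_sw[simp]: "map sw (map sw w) = w" by (induction w) auto

lemma T_sw:
  assumes "length w = n - 2"
  shows "T w n + T (map sw w) n = 6 * (\<Sum>k<n. k * (n - 1 - k))"
proof -
  have "T w n + T (map sw w) n = (\<Sum>k<n. (g w k + g (map sw w) k) * k * (n - 1 - k))"
    unfolding T_def by (simp add: sum.distrib[symmetric] algebra_simps)
  also have "\<dots> = (\<Sum>k<n. 6 * (k * (n - 1 - k)))"
  proof (rule sum.cong)
    fix k assume k: "k \<in> {..<n}"
    show "(g w k + g (map sw w) k) * k * (n - 1 - k) = 6 * (k * (n - 1 - k))"
    proof (cases "k = 0 \<or> k = n - 1")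
      case True then show ?thesis using k by auto
    next
      case False
      then have k1: "1 \<le> k" "k - 1 < length w" using k assms by auto
      have "g w k + g (map sw w) k = 6" using k1 ld_sw[of "w ! (k-1)"] by (simp add: g_code)
      then show ?thesis by simp
    qed
  qed simp
  finally show ?thesis by (simp add: sum_distrib_left)
qed

lemma K_real: "real (\<Sum>k<n. k * (n - 1 - k)) = real n * (real n - 1) * (real n - 2) / 6"
proof (induction n)
  case 0 then show ?case by simp
next
  case (Suc n)
  have "(\<Sum>k<Suc n. k * (Suc n - 1 - k)) = (\<Sum>k<n. k * (n - k))" by simp
  also have "\<dots> = (\<Sum>k<n. k * (n - 1 - k) + k)"
  proof (rule sum.cong)
    fix k assume "k \<in> {..<n}"
    then have "n - k = Suc (n - 1 - k)" by auto
    then show "k * (n - k) = k * (n - 1 - k) + k" by simp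
  qed simp
  also have "\<dots> = (\<Sum>k<n. k * (n - 1 - k)) + (\<Sum>k<n. k)" by (simp add: sum.distrib)
  finally have "real (\<Sum>k<Suc n. k * (Suc n - 1 - k)) = real (\<Sum>k<n. k * (n - 1 - k)) + real (\<Sum>k<n. k)"
    by simp
  then show ?case using Suc.IH gauss_real[of n] by (simp add: field_simps)
qed

definition P :: "nat \<Rightarrow> real" where
  "P n = 18 * real n ^ 3 + 18 * real n ^ 2 - 9 * real n"

lemma pair:
  assumes "length w = n - 2"
  shows "chain_wiener n w + chain_wiener n (map sw w) = 2 * P n"
proof -
  have "real (T w n) + real (T (map sw w) n) = 6 * real (\<Sum>k<n. k * (n - 1 - k))"
    using arg_cong[OF T_sw[OF assms], of real] by simp
  then have "real (T w n) + real (T (map sw w) n) = real n * (real n - 1) * (real n - 2)"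
    using K_real[of n] by simp
  then show ?thesis unfolding wiener_formula P_def by (simp add: algebra_simps power3_eq_cube power2_eq_square)
qed

lemma rev_inv: "length w = n - 2 \<Longrightarrow> chain_wiener n (rev w) = chain_wiener n w"
  by (simp add: wiener_formula T_rev)

lemma cls_eq: assumes "C \<in> code_classes n" "x \<in> C" "y \<in> C" shows "chain_wiener n x = chain_wiener n y"
proof -
  from assms(1) obtain w where w: "C = {w, rev w}" "length w = n - 2" unfolding code_classes_def by auto
  have r: "chain_wiener n (rev w) = chain_wiener n w" using rev_inv[OF w(2)] .
  from assms(2,3) w(1) have "x \<in> {w, rev w}" "y \<in> {w, rev w}" by auto
  then show ?thesis using r by auto
qed

lemma cls_len: "C \<in> code_classes n \<Longrightarrow> x \<in> C \<Longrightarrow> length x = n - 2"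
  unfolding code_classes_def by auto

lemma rep_in: assumes "C \<in> code_classes n" shows "(SOME w. w \<in> C) \<in> C"
proof -
  from assms obtain w where "C = {w, rev w}" unfolding code_classes_def by auto
  then have "w \<in> C" by simp
  then show ?thesis by (rule someI)
qed

definition Phi :: "letter list set \<Rightarrow> letter list set" where
  "Phi C = map sw ` C"

lemma Phi_cls: assumes "C \<in> code_classes n" shows "Phi C \<in> code_classes n"
proof -
  from assms obtain w where w: "C = {w, rev w}" "length w = n - 2" unfolding code_classes_def by auto
  then have "Phi C = {map sw w, rev (map sw w)}" "length (map sw w) = n - 2"
    by (auto simp: Phi_def rev_map)
  then show ?thesis unfolding code_classes_def by blast
qed

lemma Phi_Phi: "Phi (Phi C) = C"
  unfolding Phi_def image_image map_sw_sw by simp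

lemma UNIV_letter: "(UNIV :: letter set) = {Ortho, Meta, Para}"
proof -
  have "x \<in> {Ortho, Meta, Para}" for x by (cases x) auto
  then show ?thesis by blast
qed

lemma finite_cls: "finite (code_classes n)"
proof -
  have "code_classes n \<subseteq> (\<lambda>w. {w, rev w}) ` {w. set w \<subseteq> UNIV \<and> length w = n - 2}"
    unfolding code_classes_def by blast
  moreover have "finite {w::letter list. set w \<subseteq> UNIV \<and> length w = n - 2}"
    by (rule finite_lists_length_eq) (simp add: UNIV_letter)
  ultimately show ?thesis using finite_subset by blast
qed

lemma card_cls: "card (code_classes n) > 0"
proof -
  have "length (replicate (n-2) Ortho) = n - 2" by simp
  then have "{replicate (n-2) Ortho, rev (replicate (n-2) Ortho)} \<in> code_classes n"
    unfolding code_classes_def by blast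
  then have "code_classes n \<noteq> {}" by blast
  then show ?thesis using finite_cls card_gt_0_iff by blast
qed

theorem main_sum:
  "(\<Sum>C\<in>code_classes n. chain_wiener n (SOME w. w \<in> C)) = P n * real (card (code_classes n))"
proof -
  define f where "f = (\<lambda>C. chain_wiener n (SOME w. w \<in> C))"
  have 1: "sum (\<lambda>C. f (Phi C)) (code_classes n) = sum f (code_classes n)"
    proof (rule sum.reindex_bij_witness[where i=Phi and j=Phi])
    fix a assume a: "a \<in> code_classes n"
    show "Phi (Phi a) = a" by (rule Phi_Phi)
    show "Phi a \<in> code_classes n" by (rule Phi_cls[OF a])
    show "f (Phi a) = f (Phi a)" by (rule refl)
  next
    fix b assume b: "b \<in> code_classes n"
    show "Phi (Phi b) = b" by (rule Phi_Phi)
    show "Phi b \<in> code_classes n" by (rule Phi_cls[OF b])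
  qed
  have 2: "f (Phi C) = chain_wiener n (map sw (SOME w. w \<in> C))" if C: "C \<in> code_classes n" for C
    unfolding f_def
    by (rule cls_eq[OF Phi_cls[OF C] rep_in[OF Phi_cls[OF C]]])
       (simp add: Phi_def rep_in[OF C])
  have "2 * sum f (code_classes n) = sum f (code_classes n) + sum (\<lambda>C. f (Phi C)) (code_classes n)"
    using 1 by simp
  also have "\<dots> = (\<Sum>C\<in>code_classes n. f C + f (Phi C))" by (simp add: sum.distrib)
  also have "\<dots> = (\<Sum>C\<in>code_classes n. 2 * P n)"
  proof (rule sum.cong)
    fix C assume C: "C \<in> code_classes n"
    have "f C + f (Phi C) = chain_wiener n (SOME w. w \<in> C) + chain_wiener n (map sw (SOME w. w \<in> C))"
      using 2[OF C] by (simp add: f_def)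
    also have "\<dots> = 2 * P n" by (rule pair[OF cls_len[OF C rep_in[OF C]]])
    finally show "f C + f (Phi C) = 2 * P n" .
  qed simp
  finally have "2 * sum f (code_classes n) = 2 * (P n * real (card (code_classes n)))" by simp
  then show ?thesis unfolding f_def by simp
qed

theorem theorem5p3:
  fixes n :: nat
  assumes "n \<ge> 1"
  shows "avg_wiener n = 18 * real n ^ 3 + 18 * real n ^ 2 - 9 * real n"
  unfolding avg_wiener_def main_sum using card_cls[of n] by (simp add: P_def)

end
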